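(* Let $T$ be a Cartesian tree with $n$ nodes whose left subtree $A$ has $k-1$ nodes and whose right subtree $B$ has $n-k$ nodes. Then $|ng(T)|=|ng(A)|+|ng(B)|+|ng(T,k-1)|+|ng(T,k)|$.
   Context: Sequences are finite sequences of pairwise distinct integers indexed from $1$. The Cartesian tree $C(x)$ of a sequence $x$ of length $n$ is empty if $n=0$; otherwise, if $x[i]$ is the minimum of $x$, it is the binary tree with root $i$ (nodes labelled by positions), left subtree $C(x[1\ldots i-1])$ and right subtree $C(x[i+1\ldots n])$; Cartesian trees with $n$ nodes are exactly the binary trees with $n$ nodes. For $1\le i\le n-1$, $\tau(x,i)$ is obtained from $x$ by exchanging $x[i]$ and $x[i+1]$. For a Cartesian tree $T$ with $n$ nodes and $1\le i\le n-1$, $ng(T,i)=\{C(\tau(x,i)) : x \text{ a sequence with } C(x)=T\}$, with $ng(T,i)=\emptyset$ for $i\notin\{1,\ldots,n-1\}$, and $ng(T)=\bigcup_{i=1}^{n-1}ng(T,i)$ (so $ng$ of the empty tree or of a single node is empty). *)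

theory Defs
  imports "HOL-Library.Tree"
begin

text \<open>Sequences are lists of pairwise distinct integers (positions 1-indexed in the paper,
  0-indexed in lists). Cartesian trees are unlabelled binary trees (unit tree); node labels
  (positions) are determined by in-order traversal.\<close>

definition min_pos :: "int list \<Rightarrow> nat" where
  "min_pos xs = length (takeWhile (\<lambda>y. y \<noteq> Min (set xs)) xs)"

lemma min_pos_less: "xs \<noteq> [] \<Longrightarrow> min_pos xs < length xs"
proof -
  have "\<And>m. m \<in> set xs \<Longrightarrow> length (takeWhile (\<lambda>y. y \<noteq> m) xs) < length xs"
    by (induction xs) auto
  moreover assume "xs \<noteq> []"
  ultimately show ?thesis unfolding min_pos_def by simp
qed

function cart :: "int list \<Rightarrow> unit tree" where
  "cart xs = (if xs = [] then Leaf
     else Node (cart (take (min_pos xs) xs)) () (cart (drop (Suc (min_pos xs)) xs)))"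
  by auto
termination
  by (relation "measure length") (auto dest: min_pos_less)

declare cart.simps[simp del]

definition tau :: "int list \<Rightarrow> nat \<Rightarrow> int list" where
  "tau xs i = xs[i - 1 := xs ! i, i := xs ! (i - 1)]"

definition ng_at :: "unit tree \<Rightarrow> nat \<Rightarrow> unit tree set" where
  "ng_at T i = (if 1 \<le> i \<and> i \<le> size T - 1
     then {cart (tau xs i) | xs. distinct xs \<and> cart xs = T} else {})"

definition ng :: "unit tree \<Rightarrow> unit tree set" where
  "ng T = (\<Union>i\<in>{1..size T - 1}. ng_at T i)"

end

theory Submission
  imports Defs
begin

lemma cart_Nil: "cart [] = Leaf"
  by (subst cart.simps) simp

lemma cart_split:
  assumes d: "distinct (ys @ m # zs)" and lt: "\<forall>x\<in>set ys \<union> set zs. m < x"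
  shows "cart (ys @ m # zs) = Node (cart ys) () (cart zs)"
proof -
  let ?xs = "ys @ m # zs"
  have mn: "Min (set ?xs) = m"
    by (rule Min_eqI) (use lt in \<open>auto simp: less_imp_le\<close>)
  have nm: "m \<notin> set ys" using d by auto
  have tw: "takeWhile (\<lambda>y. y \<noteq> m) ?xs = ys"
    by (subst takeWhile_append2) (use nm in auto)
  have "min_pos ?xs = length ys" unfolding min_pos_def mn tw ..
  then show ?thesis by (subst cart.simps) simp
qed

lemma cart_decomp:
  fixes xs :: "int list"
  assumes "distinct xs" "xs \<noteq> []"
  obtains ys m zs where "xs = ys @ m # zs" "\<forall>x\<in>set ys \<union> set zs. m < x"
proof -
  define m where "m = Min (set xs)"
  have "m \<in> set xs" using assms by (simp add: m_def)
  then obtain ys zs where e: "xs = ys @ m # zs" by (meson split_list)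
  have "\<forall>x\<in>set ys \<union> set zs. m < x"
  proof
    fix x assume x: "x \<in> set ys \<union> set zs"
    then have "x \<in> set xs" using e by auto
    then have "m \<le> x" by (simp add: m_def)
    moreover have "x \<noteq> m" using assms(1) x e by auto
    ultimately show "m < x" by simp
  qed
  with e show ?thesis using that by blast
qed

lemma size_cart: "size (cart xs) = length xs"
proof (induction xs rule: cart.induct)
  case (1 xs)
  show ?case
  proof (cases "xs = []")
    case True then show ?thesis by (simp add: cart_Nil)
  next
    case False
    have "min_pos xs < length xs" using False by (rule min_pos_less)
    then show ?thesis using 1 False by (subst cart.simps) simp
  qed
qed

lemma cart_mono:
  fixes f :: "int \<Rightarrow> int"
  assumes f: "strict_mono f"
  shows "distinct xs \<Longrightarrow> cart (map f xs) = cart xs"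
proof (induction xs rule: length_induct)
  case (1 xs)
  show ?case
  proof (cases "xs = []")
    case True then show ?thesis by simp
  next
    case False
    obtain ys m zs where e: "xs = ys @ m # zs" and lt: "\<forall>x\<in>set ys \<union> set zs. m < x"
      using cart_decomp[OF "1.prems" False] by blast
    have d: "distinct (map f xs)" using "1.prems" f by (simp add: distinct_map strict_mono_imp_inj_on)
    have lt': "\<forall>x\<in>set (map f ys) \<union> set (map f zs). f m < x"
      using lt f by (auto simp: strict_mono_less)
    have "cart (map f xs) = Node (cart (map f ys)) () (cart (map f zs))"
      using cart_split[of "map f ys" "f m" "map f zs"] d lt' e by simp
    also have "cart (map f ys) = cart ys" using 1 e by auto
    also have "cart (map f zs) = cart zs" using 1 e by auto
    finally show ?thesis using cart_split[of ys m zs] "1.prems" lt e by simp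
  qed
qed

lemma set_tau: "1 \<le> i \<Longrightarrow> i < length xs \<Longrightarrow> set (tau xs i) = set xs"
  unfolding tau_def by (rule set_swap) auto

lemma distinct_tau: "1 \<le> i \<Longrightarrow> i < length xs \<Longrightarrow> distinct (tau xs i) = distinct xs"
  unfolding tau_def by (rule distinct_swap) auto

lemma length_tau: "length (tau xs i) = length xs"
  unfolding tau_def by simp

lemma tau_map: "1 \<le> i \<Longrightarrow> i < length xs \<Longrightarrow> tau (map f xs) i = map f (tau xs i)"
  unfolding tau_def by (simp add: map_update)

lemma tau_a: "1 \<le> i \<Longrightarrow> i < length ys \<Longrightarrow> tau (ys @ m # zs) i = tau ys i @ m # zs"
  unfolding tau_def by (intro nth_equalityI) (auto simp: nth_append nth_list_update)

lemma tau_b: "tau (ys @ y # m # zs) (Suc (length ys)) = ys @ m # y # zs"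
  unfolding tau_def by (simp add: nth_append list_update_append)

lemma tau_c: "tau (ys @ m # z # zs) (Suc (length ys)) = ys @ z # m # zs"
  unfolding tau_def by (simp add: nth_append list_update_append)

lemma tau_d: "1 \<le> j \<Longrightarrow> j < length zs \<Longrightarrow> tau (ys @ m # zs) (length ys + 1 + j) = ys @ m # tau zs j"
  unfolding tau_def by (intro nth_equalityI) (auto simp: nth_append nth_list_update nth_Cons')


lemma tau_split_a:
  assumes d: "distinct (ys @ m # zs)" and lt: "\<forall>x\<in>set ys \<union> set zs. m < x"
    and i: "1 \<le> i" "i < length ys"
  shows "cart (tau (ys @ m # zs) i) = Node (cart (tau ys i)) () (cart zs)"
proof -
  have "set (tau ys i) = set ys" "distinct (tau ys i) = distinct ys"
    using i set_tau distinct_tau by auto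
  then show ?thesis using d lt i by (simp add: tau_a cart_split)
qed

lemma tau_split_b:
  assumes d: "distinct (ys @ y # m # zs)" and lt: "\<forall>x\<in>set ys \<union> set (y # zs). m < x"
  shows "cart (tau (ys @ y # m # zs) (Suc (length ys))) = Node (cart ys) () (cart (y # zs))"
  using d lt by (simp add: tau_b cart_split)

lemma tau_split_c:
  assumes d: "distinct (ys @ m # z # zs)" and lt: "\<forall>x\<in>set (ys @ [z]) \<union> set zs. m < x"
  shows "cart (tau (ys @ m # z # zs) (Suc (length ys))) = Node (cart (ys @ [z])) () (cart zs)"
  using d lt cart_split[of "ys @ [z]" m zs] by (simp add: tau_c)

lemma tau_split_d:
  assumes d: "distinct (ys @ m # zs)" and lt: "\<forall>x\<in>set ys \<union> set zs. m < x"
    and j: "1 \<le> j" "j < length zs"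
  shows "cart (tau (ys @ m # zs) (length ys + 1 + j)) = Node (cart ys) () (cart (tau zs j))"
proof -
  have "set (tau zs j) = set zs" "distinct (tau zs j) = distinct zs"
    using j set_tau distinct_tau by auto
  moreover have "tau (ys @ m # zs) (length ys + 1 + j) = ys @ m # tau zs j" by (rule tau_d[OF j])
  ultimately show ?thesis using d lt j cart_split[of ys m "tau zs j"] by simp
qed

lemma tau_neq:
  fixes xs :: "int list"
  shows "distinct xs \<Longrightarrow> 1 \<le> i \<Longrightarrow> i < length xs \<Longrightarrow> cart (tau xs i) \<noteq> cart xs"
proof (induction xs arbitrary: i rule: length_induct)
  case (1 xs)
  have ne: "xs \<noteq> []" using 1 by auto
  obtain ys m zs where e: "xs = ys @ m # zs" and lt: "\<forall>x\<in>set ys \<union> set zs. m < x"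
    using cart_decomp[OF "1.prems"(1) ne] by blast
  have cx: "cart xs = Node (cart ys) () (cart zs)" using cart_split "1.prems"(1) lt e by simp
  consider "i < length ys" | "i = length ys" | "i = length ys + 1" | "i > length ys + 1" by linarith
  then show ?case
  proof cases
    case 1
    have "cart (tau ys i) \<noteq> cart ys" using "1.IH" "1.prems" 1 e by auto
    then show ?thesis using tau_split_a[of ys m zs i] "1.prems" lt e 1 cx by simp
  next
    case 2
    then have "ys \<noteq> []" using "1.prems" by auto
    then obtain ys' y where ys: "ys = ys' @ [y]" by (metis rev_exhaust)
    have "cart (tau xs i) = Node (cart ys') () (cart (y # zs))"
      using tau_split_b[of ys' y m zs] "1.prems" lt e ys 2 by simp
    moreover have "size (cart ys') \<noteq> size (cart ys)" using ys by (simp add: size_cart)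
    ultimately show ?thesis using cx by auto
  next
    case 3
    then have "zs \<noteq> []" using "1.prems" e by auto
    then obtain z zs' where zs: "zs = z # zs'" by (metis list.exhaust)
    have "cart (tau xs i) = Node (cart (ys @ [z])) () (cart zs')"
      using tau_split_c[of ys m z zs'] "1.prems" lt e zs 3 by simp
    moreover have "size (cart (ys @ [z])) \<noteq> size (cart ys)" by (simp add: size_cart)
    ultimately show ?thesis using cx by auto
  next
    case 4
    define j where "j = i - length ys - 1"
    have ij: "i = length ys + 1 + j" "1 \<le> j" "j < length zs" using 4 "1.prems" e j_def by auto
    have "cart (tau zs j) \<noteq> cart zs" using "1.IH" "1.prems" ij e by auto
    then show ?thesis using tau_split_d[of ys m zs j] "1.prems" lt e ij cx by simp
  qed
qed

lemma bound_ex: "\<exists>b::int. \<forall>x\<in>set (xs::int list). \<bar>x\<bar> < b"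
proof (induction xs)
  case Nil then show ?case by auto
next
  case (Cons a xs)
  then obtain b where "\<forall>x\<in>set xs. \<bar>x\<bar> < b" by blast
  then show ?case by (intro exI[of _ "max b (\<bar>a\<bar> + 1)"]) auto
qed

lemma glue:
  fixes ys zs :: "int list"
  assumes dy: "distinct ys" and dz: "distinct zs" and b: "\<forall>x\<in>set ys \<union> set zs. \<bar>x\<bar> < b"
  defines "xs \<equiv> map (\<lambda>y. y + b) ys @ 0 # map (\<lambda>z. z + 3 * b) zs"
  shows "distinct xs" "cart xs = Node (cart ys) () (cart zs)"
proof -
  have sm1: "strict_mono (\<lambda>y::int. y + b)" by (rule strict_monoI) simp
  have sm2: "strict_mono (\<lambda>y::int. y + 3 * b)" by (rule strict_monoI) simp
  have lt: "\<forall>x\<in>set (map (\<lambda>y. y + b) ys) \<union> set (map (\<lambda>z. z + 3 * b) zs). 0 < x"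
  proof (intro ballI)
    fix x assume "x \<in> set (map (\<lambda>y. y + b) ys) \<union> set (map (\<lambda>z. z + 3 * b) zs)"
    then obtain y where "y \<in> set ys \<union> set zs" "x = y + b \<or> x = y + 3 * b" by auto
    moreover have "\<bar>y\<bar> < b" using b calculation(1) by blast
    ultimately show "0 < x" by linarith
  qed
  have dis: "set (map (\<lambda>y. y + b) ys) \<inter> set (map (\<lambda>z. z + 3 * b) zs) = {}"
  proof -
    { fix y z assume "y \<in> set ys" "z \<in> set zs"
      then have "\<bar>y\<bar> < b" "\<bar>z\<bar> < b" using b by auto
      then have "y + b < z + 3 * b" by linarith }
    then show ?thesis by fastforce
  qed
  show d: "distinct xs" unfolding xs_def using dy dz lt dis
    by (auto simp: distinct_map inj_on_def)
  have "cart xs = Node (cart (map (\<lambda>y. y + b) ys)) () (cart (map (\<lambda>z. z + 3 * b) zs))"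
    using cart_split d lt unfolding xs_def by blast
  then show "cart xs = Node (cart ys) () (cart zs)"
    using cart_mono[OF sm1 dy] cart_mono[OF sm2 dz] by simp
qed

lemma bound2: "\<exists>b::int. \<forall>x\<in>set (ys::int list) \<union> set zs. \<bar>x\<bar> < b"
  using bound_ex[of "ys @ zs"] by simp

lemma realize: "\<exists>xs. distinct xs \<and> cart xs = (t :: unit tree)"
proof (induction t)
  case Leaf then show ?case by (intro exI[of _ "[]"]) (simp add: cart_Nil)
next
  case (Node l u r)
  then obtain ys zs where "distinct ys" "cart ys = l" "distinct zs" "cart zs = r" by blast
  moreover obtain b where "\<forall>x\<in>set ys \<union> set zs. \<bar>x\<bar> < b" using bound2 by blast
  ultimately show ?case using glue by (metis (full_types) old.unit.exhaust)
qed

lemma finite_trees: "finite {t :: unit tree. size t \<le> n}"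
proof (induction n)
  case 0
  have "{t :: unit tree. size t \<le> 0} = {Leaf}" by auto
  then show ?case by simp
next
  case (Suc n)
  have "{t :: unit tree. size t \<le> Suc n} \<subseteq> insert Leaf ((\<lambda>(l, r). Node l () r) ` ({t. size t \<le> n} \<times> {t. size t \<le> n}))"
  proof
    fix t :: "unit tree" assume "t \<in> {t. size t \<le> Suc n}"
    then show "t \<in> insert Leaf ((\<lambda>(l, r). Node l () r) ` ({t. size t \<le> n} \<times> {t. size t \<le> n}))"
      by (cases t) force+
  qed
  then show ?case using Suc by (meson finite_SigmaI finite_imageI finite_insert finite_subset)
qed

lemma ng_at_size: "t \<in> ng_at T i \<Longrightarrow> size t = size T"
  unfolding ng_at_def by (auto split: if_splits simp: size_cart length_tau)

lemma finite_ng_at: "finite (ng_at T i)"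
  by (rule finite_subset[OF _ finite_trees[of "size T"]]) (auto dest: ng_at_size)

lemma finite_ng: "finite (ng T)"
  unfolding ng_def by (auto intro: finite_ng_at)

lemma ng_size: "t \<in> ng T \<Longrightarrow> size t = size T"
  unfolding ng_def by (auto dest: ng_at_size)

lemma not_self: "T \<notin> ng T"
proof
  assume "T \<in> ng T"
  then obtain i xs where "1 \<le> i" "i \<le> size T - 1" "distinct xs" "cart xs = T" "cart (tau xs i) = T"
    unfolding ng_def ng_at_def by (auto split: if_splits)
  moreover have "i < length xs" using calculation by (auto simp: size_cart)
  ultimately show False using tau_neq[of xs i] by auto
qed


lemma decomp_T:
  assumes "distinct xs" "cart xs = Node A () B"
  obtains ys m zs where "xs = ys @ m # zs" "\<forall>x\<in>set ys \<union> set zs. m < x"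
    "cart ys = A" "cart zs = B" "length ys = size A" "length zs = size B"
proof -
  have "xs \<noteq> []" using assms by (auto simp: cart_Nil)
  then obtain ys m zs where e: "xs = ys @ m # zs" and lt: "\<forall>x\<in>set ys \<union> set zs. m < x"
    using cart_decomp[OF assms(1)] by blast
  have "cart xs = Node (cart ys) () (cart zs)" using cart_split assms(1) lt e by simp
  then have "cart ys = A" "cart zs = B" using assms by auto
  then show ?thesis using that e lt size_cart by metis
qed

lemma sideA:
  assumes i: "1 \<le> i" "i < size A"
  shows "ng_at (Node A () B) i = (\<lambda>A'. Node A' () B) ` ng_at A i"
proof
  show "ng_at (Node A () B) i \<subseteq> (\<lambda>A'. Node A' () B) ` ng_at A i"
  proof
    fix t assume "t \<in> ng_at (Node A () B) i"
    then obtain xs where xs: "distinct xs" "cart xs = Node A () B" "t = cart (tau xs i)"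
      unfolding ng_at_def by (auto split: if_splits)
    then obtain ys m zs where d: "xs = ys @ m # zs" "\<forall>x\<in>set ys \<union> set zs. m < x"
      "cart ys = A" "cart zs = B" "length ys = size A" "length zs = size B"
      using decomp_T[OF xs(1,2)] by blast
    have "t = Node (cart (tau ys i)) () B" using tau_split_a[of ys m zs i] xs d i by simp
    moreover have "cart (tau ys i) \<in> ng_at A i" unfolding ng_at_def using i d xs by auto
    ultimately show "t \<in> (\<lambda>A'. Node A' () B) ` ng_at A i" by blast
  qed
next
  show "(\<lambda>A'. Node A' () B) ` ng_at A i \<subseteq> ng_at (Node A () B) i"
  proof
    fix t assume "t \<in> (\<lambda>A'. Node A' () B) ` ng_at A i"
    then obtain ys where ys: "distinct ys" "cart ys = A" "t = Node (cart (tau ys i)) () B"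
      unfolding ng_at_def by (auto split: if_splits)
    obtain zs where zs: "distinct zs" "cart zs = B" using realize by blast
    obtain b where b: "\<forall>x\<in>set ys \<union> set zs. \<bar>x\<bar> < b" using bound2 by blast
    define xs where "xs = map (\<lambda>y. y + b) ys @ 0 # map (\<lambda>z. z + 3 * b) zs"
    have gx: "distinct xs" "cart xs = Node A () B" using glue[OF ys(1) zs(1) b] ys zs xs_def by auto
    have "length ys = size A" using ys(2) size_cart by metis
    then have li: "i < length ys" using i by simp
    have "tau xs i = map (\<lambda>y. y + b) (tau ys i) @ 0 # map (\<lambda>z. z + 3 * b) zs"
      unfolding xs_def using li i by (simp add: tau_a tau_map)
    moreover have "distinct (tau ys i)" "set (tau ys i) = set ys"
      using li i ys distinct_tau set_tau by auto
    ultimately have "cart (tau xs i) = Node (cart (tau ys i)) () (cart zs)"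
      using glue[of "tau ys i" zs b] zs b by simp
    then have "cart (tau xs i) = t" using ys zs by simp
    moreover have "i \<le> size (Node A () B) - 1" using i by simp
    ultimately show "t \<in> ng_at (Node A () B) i" unfolding ng_at_def using gx i by auto
  qed
qed

lemma sideB:
  assumes j: "1 \<le> j"
  shows "ng_at (Node A () B) (size A + 1 + j) = (\<lambda>B'. Node A () B') ` ng_at B j"
proof
  show "ng_at (Node A () B) (size A + 1 + j) \<subseteq> (\<lambda>B'. Node A () B') ` ng_at B j"
  proof
    fix t assume t: "t \<in> ng_at (Node A () B) (size A + 1 + j)"
    then obtain xs where xs: "distinct xs" "cart xs = Node A () B" "t = cart (tau xs (size A + 1 + j))"
      and jr: "size A + 1 + j \<le> size A + size B"
      unfolding ng_at_def by (auto split: if_splits)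
    then obtain ys m zs where d: "xs = ys @ m # zs" "\<forall>x\<in>set ys \<union> set zs. m < x"
      "cart ys = A" "cart zs = B" "length ys = size A" "length zs = size B"
      using decomp_T[OF xs(1,2)] by blast
    have jl: "j < length zs" using jr d by simp
    have "t = Node A () (cart (tau zs j))" using tau_split_d[of ys m zs j] xs d j jl by simp
    moreover have "cart (tau zs j) \<in> ng_at B j" unfolding ng_at_def using j jl d xs by auto
    ultimately show "t \<in> (\<lambda>B'. Node A () B') ` ng_at B j" by blast
  qed
next
  show "(\<lambda>B'. Node A () B') ` ng_at B j \<subseteq> ng_at (Node A () B) (size A + 1 + j)"
  proof
    fix t assume "t \<in> (\<lambda>B'. Node A () B') ` ng_at B j"
    then obtain zs where zs: "distinct zs" "cart zs = B" "t = Node A () (cart (tau zs j))"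
      and jB: "j \<le> size B - 1"
      unfolding ng_at_def by (auto split: if_splits)
    obtain ys where ys: "distinct ys" "cart ys = A" using realize by blast
    obtain b where b: "\<forall>x\<in>set ys \<union> set zs. \<bar>x\<bar> < b" using bound2 by blast
    define xs where "xs = map (\<lambda>y. y + b) ys @ 0 # map (\<lambda>z. z + 3 * b) zs"
    have gx: "distinct xs" "cart xs = Node A () B" using glue[OF ys(1) zs(1) b] ys zs xs_def by auto
    have lzs: "length zs = size B" using zs(2) size_cart by metis
    then have lj: "j < length zs" using j jB by simp
    have ly: "length ys = size A" using ys(2) size_cart by metis
    have "tau xs (size A + 1 + j) = map (\<lambda>y. y + b) ys @ 0 # map (\<lambda>z. z + 3 * b) (tau zs j)"
      unfolding xs_def using lj j tau_d[of j "map (\<lambda>z. z + 3 * b) zs" "map (\<lambda>y. y + b) ys" 0]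
      by (simp add: tau_map ly)
    moreover have "distinct (tau zs j)" "set (tau zs j) = set zs"
      using lj j zs distinct_tau set_tau by auto
    ultimately have "cart (tau xs (size A + 1 + j)) = Node (cart ys) () (cart (tau zs j))"
      using glue[of ys "tau zs j" b] ys b by simp
    then have "cart (tau xs (size A + 1 + j)) = t" using ys zs by simp
    moreover have "size A + 1 + j \<le> size (Node A () B) - 1" using lj lzs by simp
    ultimately show "t \<in> ng_at (Node A () B) (size A + 1 + j)" unfolding ng_at_def using gx j by auto
  qed
qed

lemma shapeP:
  assumes "t \<in> ng_at (Node A () B) (size A)"
  shows "\<exists>L R. t = Node L () R \<and> Suc (size L) = size A"
proof -
  obtain xs where xs: "distinct xs" "cart xs = Node A () B" "t = cart (tau xs (size A))"
    and r: "1 \<le> size A"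
    using assms unfolding ng_at_def by (auto split: if_splits)
  then obtain ys m zs where d: "xs = ys @ m # zs" "\<forall>x\<in>set ys \<union> set zs. m < x"
    "cart ys = A" "cart zs = B" "length ys = size A" "length zs = size B"
    using decomp_T[OF xs(1,2)] by blast
  then have "ys \<noteq> []" using r by auto
  then obtain ys' y where ys: "ys = ys' @ [y]" by (metis rev_exhaust)
  have "t = Node (cart ys') () (cart (y # zs))"
    using tau_split_b[of ys' y m zs] xs d ys by simp
  moreover have "Suc (size (cart ys')) = size A" using ys d by (simp add: size_cart)
  ultimately show ?thesis by blast
qed

lemma shapeQ:
  assumes "t \<in> ng_at (Node A () B) (Suc (size A))"
  shows "\<exists>L R. t = Node L () R \<and> size L = Suc (size A)"
proof -
  obtain xs where xs: "distinct xs" "cart xs = Node A () B" "t = cart (tau xs (Suc (size A)))"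
    and r: "Suc (size A) \<le> size A + size B"
    using assms unfolding ng_at_def by (auto split: if_splits)
  then obtain ys m zs where d: "xs = ys @ m # zs" "\<forall>x\<in>set ys \<union> set zs. m < x"
    "cart ys = A" "cart zs = B" "length ys = size A" "length zs = size B"
    using decomp_T[OF xs(1,2)] by blast
  then have "zs \<noteq> []" using r by auto
  then obtain z zs' where zs: "zs = z # zs'" by (metis list.exhaust)
  have "t = Node (cart (ys @ [z])) () (cart zs')"
    using tau_split_c[of ys m z zs'] xs d zs by simp
  moreover have "size (cart (ys @ [z])) = Suc (size A)" using d by (simp add: size_cart)
  ultimately show ?thesis by blast
qed




lemma ng_at_sub: "ng_at T i \<subseteq> ng T"
  unfolding ng_def by (cases "1 \<le> i \<and> i \<le> size T - 1") (auto simp: ng_at_def)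

lemma main:
  fixes A B :: "unit tree"
  shows "card (ng (Node A () B)) = card (ng A) + card (ng B) + card (ng_at (Node A () B) (size A))
     + card (ng_at (Node A () B) (Suc (size A)))"
proof -
  define T where "T = Node A () B"
  define p where "p = size A"
  define q where "q = size B"
  define XA where "XA = (\<lambda>A'. Node A' () B) ` ng A"
  define XB where "XB = (\<lambda>B'. Node A () B') ` ng B"
  define P where "P = ng_at T p"
  define Q where "Q = ng_at T (Suc p)"
  have XA: "XA = (\<Union>i\<in>{1..p-1}. ng_at T i)"
    unfolding XA_def ng_def T_def p_def image_UN using sideA
    by (intro SUP_cong) auto
  have XB: "XB = (\<Union>j\<in>{1..q-1}. ng_at T (p + 1 + j))"
    unfolding XB_def ng_def T_def p_def q_def image_UN using sideB
    by (intro SUP_cong) auto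
  have ngT: "ng T = (\<Union>i\<in>{1..p+q}. ng_at T i)" unfolding ng_def T_def p_def q_def by simp
  have U: "ng T = XA \<union> XB \<union> P \<union> Q"
  proof
    show "ng T \<subseteq> XA \<union> XB \<union> P \<union> Q"
    proof
      fix t assume "t \<in> ng T"
      then obtain i where i: "1 \<le> i" "i \<le> p + q" "t \<in> ng_at T i" unfolding ngT by auto
      consider "i < p" | "i = p" | "i = p + 1" | "i > p + 1" by linarith
      then show "t \<in> XA \<union> XB \<union> P \<union> Q"
      proof cases
        case 1 then show ?thesis unfolding XA using i by auto
      next
        case 2 then show ?thesis unfolding P_def using i by auto
      next
        case 3 then show ?thesis unfolding Q_def using i by auto
      next
        case 4
        define j where "j = i - p - 1"
        have "i = p + 1 + j" "1 \<le> j" "j \<le> q - 1" using 4 i j_def by auto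
        then have "t \<in> ng_at T (p + 1 + j)" using i by simp
        then have "t \<in> XB" unfolding XB using \<open>1 \<le> j\<close> \<open>j \<le> q - 1\<close> by (intro UN_I[of j]) auto
        then show ?thesis by simp
      qed
    qed
  next
    have "XA \<subseteq> ng T" "XB \<subseteq> ng T" "P \<subseteq> ng T" "Q \<subseteq> ng T"
      unfolding XA XB P_def Q_def using ng_at_sub by blast+
    then show "XA \<union> XB \<union> P \<union> Q \<subseteq> ng T" by blast
  qed
  have fin: "finite XA" "finite XB" "finite P" "finite Q"
    unfolding XA_def XB_def P_def Q_def using finite_ng finite_ng_at by auto
  have d1: "XA \<inter> XB = {}" unfolding XA_def XB_def using not_self by auto
  have sXA: "\<And>t. t \<in> XA \<Longrightarrow> \<exists>L R. t = Node L () R \<and> size L = p"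
    unfolding XA_def p_def using ng_size by blast
  have sXB: "\<And>t. t \<in> XB \<Longrightarrow> \<exists>L R. t = Node L () R \<and> size L = p"
    unfolding XB_def p_def by blast
  have sP: "\<And>t. t \<in> P \<Longrightarrow> \<exists>L R. t = Node L () R \<and> Suc (size L) = p"
    unfolding P_def T_def p_def using shapeP by blast
  have sQ: "\<And>t. t \<in> Q \<Longrightarrow> \<exists>L R. t = Node L () R \<and> size L = Suc p"
    unfolding Q_def T_def p_def using shapeQ by blast
  have d2: "(XA \<union> XB) \<inter> P = {}"
  proof (rule ccontr)
    assume "(XA \<union> XB) \<inter> P \<noteq> {}"
    then obtain t where t: "t \<in> XA \<union> XB" "t \<in> P" by blast
    from sP[OF t(2)] obtain L R where LR: "t = Node L () R" "Suc (size L) = p" by blast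
    from t(1) obtain L' R' where "t = Node L' () R'" "size L' = p" using sXA sXB by blast
    then show False using LR by simp
  qed
  have d3: "(XA \<union> XB \<union> P) \<inter> Q = {}"
  proof (rule ccontr)
    assume "(XA \<union> XB \<union> P) \<inter> Q \<noteq> {}"
    then obtain t where t: "t \<in> XA \<union> XB \<union> P" "t \<in> Q" by blast
    from sQ[OF t(2)] obtain L R where LR: "t = Node L () R" "size L = Suc p" by blast
    from t(1) obtain L' R' where "t = Node L' () R'" "size L' = p \<or> Suc (size L') = p"
      using sXA sXB sP by blast
    then show False using LR by auto
  qed
  have "card (ng T) = card XA + card XB + card P + card Q"
    unfolding U using fin d1 d2 d3 by (simp add: card_Un_disjoint)
  moreover have "card XA = card (ng A)" unfolding XA_def by (rule card_image) (auto simp: inj_on_def)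
  moreover have "card XB = card (ng B)" unfolding XB_def by (rule card_image) (auto simp: inj_on_def)
  ultimately show ?thesis unfolding T_def P_def Q_def p_def by simp
qed

theorem lemma7:
  fixes T A B :: "unit tree" and n k :: nat
  assumes "T = Node A () B"
    and "size T = n"
    and "size A = k - 1"
    and "size B = n - k"
    and "1 \<le> k" and "k \<le> n"
  shows "card (ng T) = card (ng A) + card (ng B) + card (ng_at T (k - 1)) + card (ng_at T k)"
proof -
  have "k = Suc (size A)" using assms by simp
  then show ?thesis using main[of A B] assms(1,3) by simp
qed

end
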